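(* Let $a_0,a_1,\dots$ and $b_0,b_1,\dots$ be distinct complex numbers and $\mathscr L$ a linear functional on the space of rational functions of $t$ whose poles lie in $\{a_j\}\cup\{b_j\}$. For $n\ge0$ let $\mathsf A_n,\mathsf B_n,\mathsf C_n$ be polynomials of degree $n$ such that for every polynomial $p$ of degree $<n$: $\mathscr L\big(\mathsf A_n(t)p(t)/[(t-a_0)\cdots(t-a_n)(t-b_0)\cdots(t-b_{n-1})]\big)=0$, $\mathscr L\big(\mathsf B_n(t)p(t)/[(t-a_0)\cdots(t-a_{n-1})(t-b_0)\cdots(t-b_n)]\big)=0$, $\mathscr L\big(\mathsf C_n(t)p(t)/[(t-a_0)\cdots(t-a_n)(t-b_0)\cdots(t-b_n)]\big)=0$, and assume each of these three orthogonality conditions determines its polynomial uniquely up to a constant factor. Then there are constants $\kappa_1,\kappa_2,\kappa_3$ (possibly zero) such that $$\kappa_1\mathsf A_n(t)=\frac{\mathsf C_n(b_n)\mathsf A_{n+1}(t)-\mathsf A_{n+1}(b_n)\mathsf C_n(t)}{t-b_n},\qquad \kappa_2\mathsf B_n(t)=\frac{\mathsf C_n(a_n)\mathsf B_{n+1}(t)-\mathsf B_{n+1}(a_n)\mathsf C_n(t)}{t-a_n},$$ $$\kappa_3\mathsf C_n(t)=\frac{\mathsf A_{n+1}(a_{n+1})\mathsf C_{n+1}(t)-\mathsf C_{n+1}(a_{n+1})\mathsf A_{n+1}(t)}{t-a_{n+1}},$$ the right-hand sides being polynomials in $t$. *)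

theory Defs
  imports "HOL-Computational_Algebra.Polynomial" "HOL-Computational_Algebra.Fraction_Field"
begin

definition rat_space :: "(nat \<Rightarrow> complex) \<Rightarrow> (nat \<Rightarrow> complex) \<Rightarrow> complex poly fract set" where
  "rat_space a b = {Fract p q | p q. q \<noteq> 0 \<and> (\<forall>z. poly q z = 0 \<longrightarrow> z \<in> range a \<union> range b)}"

text \<open>A linear functional on the space S (complex scalars act as constant rational functions).\<close>
definition linear_functional_on :: "complex poly fract set \<Rightarrow> (complex poly fract \<Rightarrow> complex) \<Rightarrow> bool" where
  "linear_functional_on S L \<longleftrightarrow>
     (\<forall>f\<in>S. \<forall>g\<in>S. L (f + g) = L f + L g) \<and>
     (\<forall>c. \<forall>f\<in>S. L (Fract [:c:] 1 * f) = c * L f)"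

definition lin_prod :: "(nat \<Rightarrow> complex) \<Rightarrow> nat \<Rightarrow> complex poly" where
  "lin_prod c n = (\<Prod>j<n. [:- c j, 1:])"

definition orth :: "(complex poly fract \<Rightarrow> complex) \<Rightarrow> (nat \<Rightarrow> complex) \<Rightarrow> (nat \<Rightarrow> complex)
    \<Rightarrow> nat \<Rightarrow> nat \<Rightarrow> nat \<Rightarrow> complex poly \<Rightarrow> bool" where
  "orth L a b k m n P \<longleftrightarrow>
     (\<forall>p. degree p < n \<longrightarrow> L (Fract (P * p) (lin_prod a k * lin_prod b m)) = 0)"

end

theory Submission
  imports Defs
begin


lemma lin_prod_Suc: "lin_prod c (Suc k) = lin_prod c k * [:- c k, 1:]"
  by (simp add: lin_prod_def)

lemma lin_prod_nz: "lin_prod c k \<noteq> 0"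
  by (simp add: lin_prod_def)

lemma lin_prod_root: "poly (lin_prod c k) z = 0 \<Longrightarrow> z \<in> range c"
  by (auto simp: lin_prod_def poly_prod)

lemma Fract_mem: "Fract X (lin_prod a k * lin_prod b m) \<in> rat_space a b"
  unfolding rat_space_def
  apply (rule CollectI)
  apply (rule exI[of _ X], rule exI[of _ "lin_prod a k * lin_prod b m"])
  using lin_prod_nz[of a k] lin_prod_nz[of b m] lin_prod_root[of a k] lin_prod_root[of b m]
  by (auto simp: poly_mult)

lemma fract_cancel_gen: "r \<noteq> 0 \<Longrightarrow> D \<noteq> 0 \<Longrightarrow> Fract X D = Fract (r*X) (D*r)"
  by (simp add: eq_fract mult_ac)

lemma Llin:
  assumes lin: "linear_functional_on (rat_space a b) L"
  shows "L (Fract (smult \<alpha> X - smult \<beta> Y) (lin_prod a k * lin_prod b m))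
     = \<alpha> * L (Fract X (lin_prod a k * lin_prod b m)) - \<beta> * L (Fract Y (lin_prod a k * lin_prod b m))"
proof -
  define D where "D = lin_prod a k * lin_prod b m"
  have D0: "D \<noteq> 0" using lin_prod_nz unfolding D_def by simp
  have e1: "Fract [:\<alpha>:] 1 * Fract X D = Fract (smult \<alpha> X) D" by simp
  have e2: "Fract [:-\<beta>:] 1 * Fract Y D = Fract (smult (-\<beta>) Y) D" by simp
  have e3: "Fract (smult \<alpha> X - smult \<beta> Y) D = Fract (smult \<alpha> X) D + Fract (smult (-\<beta>) Y) D"
    using D0 by (simp add: eq_fract algebra_simps)
  have m1: "Fract (smult \<alpha> X) D \<in> rat_space a b" "Fract (smult (-\<beta>) Y) D \<in> rat_space a b"
    "Fract X D \<in> rat_space a b" "Fract Y D \<in> rat_space a b"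
    unfolding D_def by (rule Fract_mem)+
  have add: "\<forall>f\<in>rat_space a b. \<forall>g\<in>rat_space a b. L (f + g) = L f + L g"
    and mul: "\<forall>c. \<forall>f\<in>rat_space a b. L (Fract [:c:] 1 * f) = c * L f"
    using lin unfolding linear_functional_on_def by blast+
  have "L (Fract (smult \<alpha> X - smult \<beta> Y) D) = L (Fract (smult \<alpha> X) D) + L (Fract (smult (-\<beta>) Y) D)"
    unfolding e3 using add m1 by blast
  also have "L (Fract (smult \<alpha> X) D) = \<alpha> * L (Fract X D)"
    unfolding e1[symmetric] using mul m1 by blast
  also have "L (Fract (smult (-\<beta>) Y) D) = (-\<beta>) * L (Fract Y D)"
    unfolding e2[symmetric] using mul m1 by blast
  finally show ?thesis unfolding D_def by simp
qed

lemma orth_comb: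
  assumes lin: "linear_functional_on (rat_space a b) L"
    and "orth L a b k m n P" "orth L a b k m n Q"
  shows "orth L a b k m n (smult \<alpha> P - smult \<beta> Q)"
  using assms(2,3) unfolding orth_def
proof (intro allI impI)
  fix p :: "complex poly" assume h: "\<forall>p. degree p < n \<longrightarrow> L (Fract (P * p) (lin_prod a k * lin_prod b m)) = 0"
    "\<forall>p. degree p < n \<longrightarrow> L (Fract (Q * p) (lin_prod a k * lin_prod b m)) = 0" "degree p < n"
  have "(smult \<alpha> P - smult \<beta> Q) * p = smult \<alpha> (P*p) - smult \<beta> (Q*p)" by (simp add: algebra_simps)
  then show "L (Fract ((smult \<alpha> P - smult \<beta> Q) * p) (lin_prod a k * lin_prod b m)) = 0"
    using Llin[OF lin] h by simp
qed

lemma orth_mono: "orth L a b k m N P \<Longrightarrow> n \<le> N \<Longrightarrow> orth L a b k m n P"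
  unfolding orth_def by auto

lemma shiftA:
  assumes "orth L a b (Suc k) m (Suc n) P"
  shows "\<forall>p. degree p < n \<longrightarrow> L (Fract (P*p) (lin_prod a k * lin_prod b m)) = 0"
proof (intro allI impI)
  fix p :: "complex poly" assume d: "degree p < n"
  have d2: "degree (p * [:- a k, 1:]) < Suc n"
    using d degree_mult_le[of p "[:- a k, 1:]"] by simp
  have r0: "[:- a k, 1:] \<noteq> 0" by simp
  have D0: "lin_prod a k * lin_prod b m \<noteq> 0" using lin_prod_nz[of a k] lin_prod_nz[of b m] by simp
  have "Fract (P*p) (lin_prod a k * lin_prod b m)
     = Fract ([:- a k, 1:]*(P*p)) (lin_prod a k * lin_prod b m * [:- a k, 1:])"
    by (rule fract_cancel_gen[OF r0 D0])
  also have "[:- a k, 1:]*(P*p) = P*(p * [:- a k, 1:])" by (simp only: mult_ac)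
  also have "lin_prod a k * lin_prod b m * [:- a k, 1:] = lin_prod a (Suc k) * lin_prod b m"
    by (simp only: lin_prod_Suc mult_ac)
  finally have "Fract (P*p) (lin_prod a k * lin_prod b m)
     = Fract (P*(p * [:- a k, 1:])) (lin_prod a (Suc k) * lin_prod b m)" .
  then show "L (Fract (P*p) (lin_prod a k * lin_prod b m)) = 0"
    using assms d2 unfolding orth_def by simp
qed

lemma shiftB:
  assumes "orth L a b k (Suc m) (Suc n) P"
  shows "\<forall>p. degree p < n \<longrightarrow> L (Fract (P*p) (lin_prod a k * lin_prod b m)) = 0"
proof (intro allI impI)
  fix p :: "complex poly" assume d: "degree p < n"
  have d2: "degree (p * [:- b m, 1:]) < Suc n"
    using d degree_mult_le[of p "[:- b m, 1:]"] by simp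
  have r0: "[:- b m, 1:] \<noteq> 0" by simp
  have D0: "lin_prod a k * lin_prod b m \<noteq> 0" using lin_prod_nz[of a k] lin_prod_nz[of b m] by simp
  have "Fract (P*p) (lin_prod a k * lin_prod b m)
     = Fract ([:- b m, 1:]*(P*p)) (lin_prod a k * lin_prod b m * [:- b m, 1:])"
    by (rule fract_cancel_gen[OF r0 D0])
  also have "[:- b m, 1:]*(P*p) = P*(p * [:- b m, 1:])" by (simp only: mult_ac)
  also have "lin_prod a k * lin_prod b m * [:- b m, 1:] = lin_prod a k * lin_prod b (Suc m)"
    by (simp only: lin_prod_Suc mult_ac)
  finally have "Fract (P*p) (lin_prod a k * lin_prod b m)
     = Fract (P*(p * [:- b m, 1:])) (lin_prod a k * lin_prod b (Suc m))" .
  then show "L (Fract (P*p) (lin_prod a k * lin_prod b m)) = 0"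
    using assms d2 unfolding orth_def by simp
qed

lemma degle:
  assumes lin: "linear_functional_on (rat_space a b) L"
    and uniq: "\<And>Q. Q \<noteq> 0 \<Longrightarrow> degree Q = n \<Longrightarrow> orth L a b k m n Q \<Longrightarrow> \<exists>c. Q = smult c P"
    and P: "P \<noteq> 0" "degree P = n" "orth L a b k m n P"
    and Q: "orth L a b k m n Q" "degree Q \<le> n"
  shows "\<exists>c. Q = smult c P"
proof (cases "Q = 0")
  case True then show ?thesis by (intro exI[of _ 0]) simp
next
  case False
  show ?thesis
  proof (cases "degree Q = n")
    case True then show ?thesis using uniq False Q by blast
  next
    case F2: False
    then have dl: "degree Q < degree P" using Q P by simp
    have o: "orth L a b k m n (smult 1 P - smult (-1) Q)" by (rule orth_comb[OF lin P(3) Q(1)])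
    have eq: "smult 1 P - smult (-1) Q = P + Q" by simp
    have "degree (P + Q) = n" using degree_add_eq_left[OF dl] P by simp
    moreover have "P + Q \<noteq> 0" using \<open>degree (P + Q) = n\<close> dl P by auto
    ultimately obtain c where "P + Q = smult c P" using uniq o eq by metis
    then have "Q = smult (c - 1) P" by (simp add: algebra_simps smult_diff_left)
    then show ?thesis by blast
  qed
qed

lemma step:
  assumes lin: "linear_functional_on (rat_space a b) L"
    and uniq: "\<And>Q. Q \<noteq> 0 \<Longrightarrow> degree Q = n \<Longrightarrow> orth L a b k m n Q \<Longrightarrow> \<exists>c. Q = smult c P"
    and P: "P \<noteq> 0" "degree P = n" "orth L a b k m n P"
    and dX: "degree X \<le> Suc n" and dY: "degree Y \<le> Suc n"
    and hX: "\<forall>p. degree p < n \<longrightarrow> L (Fract (X*p) (lin_prod a k' * lin_prod b m')) = 0"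
    and hY: "\<forall>p. degree p < n \<longrightarrow> L (Fract (Y*p) (lin_prod a k' * lin_prod b m')) = 0"
    and hD: "lin_prod a k * lin_prod b m * [:-c, 1:] = lin_prod a k' * lin_prod b m'"
  shows "\<exists>\<kappa>. smult \<kappa> P * [:-c, 1:] = smult (poly Y c) X - smult (poly X c) Y"
proof -
  define R where "R = smult (poly Y c) X - smult (poly X c) Y"
  have "poly R c = 0" unfolding R_def by simp
  then obtain Q where RQ: "R = [:-c, 1:] * Q" using poly_eq_0_iff_dvd by (metis dvdE)
  have dR: "degree R \<le> Suc n" unfolding R_def
    using dX dY by (meson degree_diff_le degree_smult_le order_trans)
  have dQ: "degree Q \<le> n"
  proof (cases "Q = 0")
    case True then show ?thesis by simp
  next
    case False
    then have "degree R = 1 + degree Q" unfolding RQ by (subst degree_mult_eq) auto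
    then show ?thesis using dR by simp
  qed
  have oQ: "orth L a b k m n Q" unfolding orth_def
  proof (intro allI impI)
    fix p :: "complex poly" assume d: "degree p < n"
    have r0: "[:-c, 1:] \<noteq> 0" by simp
    have D0: "lin_prod a k * lin_prod b m \<noteq> 0" using lin_prod_nz[of a k] lin_prod_nz[of b m] by simp
    have "Fract (Q*p) (lin_prod a k * lin_prod b m) = Fract ([:-c, 1:]*(Q*p)) (lin_prod a k * lin_prod b m * [:-c, 1:])"
      by (rule fract_cancel_gen[OF r0 D0])
    also have "[:-c, 1:]*(Q*p) = R*p" unfolding RQ by (simp only: mult.assoc)
    also have "lin_prod a k * lin_prod b m * [:-c, 1:] = lin_prod a k' * lin_prod b m'" by (rule hD)
    also have "R*p = smult (poly Y c) (X*p) - smult (poly X c) (Y*p)" unfolding R_def by (simp add: algebra_simps)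
    finally show "L (Fract (Q*p) (lin_prod a k * lin_prod b m)) = 0"
      using Llin[OF lin] hX hY d by simp
  qed
  obtain \<kappa> where "Q = smult \<kappa> P" using degle[OF lin uniq P oQ dQ] by blast
  then have "smult \<kappa> P * [:-c, 1:] = R" unfolding RQ by (simp add: mult.commute)
  then show ?thesis unfolding R_def by blast
qed

theorem mainTheorem11:
  fixes a b :: "nat \<Rightarrow> complex"
    and L :: "complex poly fract \<Rightarrow> complex"
    and A B C :: "nat \<Rightarrow> complex poly"
    and n :: nat
  assumes distinct_a: "inj a" and distinct_b: "inj b" and disjoint: "range a \<inter> range b = {}"
    and lin: "linear_functional_on (rat_space a b) L"
    and degA: "\<And>m. A m \<noteq> 0 \<and> degree (A m) = m"
    and degB: "\<And>m. B m \<noteq> 0 \<and> degree (B m) = m"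
    and degC: "\<And>m. C m \<noteq> 0 \<and> degree (C m) = m"
    and orthA: "\<And>m. orth L a b (Suc m) m m (A m)"
    and orthB: "\<And>m. orth L a b m (Suc m) m (B m)"
    and orthC: "\<And>m. orth L a b (Suc m) (Suc m) m (C m)"
    and uniqA: "\<And>m Q. Q \<noteq> 0 \<Longrightarrow> degree Q = m \<Longrightarrow> orth L a b (Suc m) m m Q \<Longrightarrow>
                  \<exists>c. Q = smult c (A m)"
    and uniqB: "\<And>m Q. Q \<noteq> 0 \<Longrightarrow> degree Q = m \<Longrightarrow> orth L a b m (Suc m) m Q \<Longrightarrow>
                  \<exists>c. Q = smult c (B m)"
    and uniqC: "\<And>m Q. Q \<noteq> 0 \<Longrightarrow> degree Q = m \<Longrightarrow> orth L a b (Suc m) (Suc m) m Q \<Longrightarrow>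
                  \<exists>c. Q = smult c (C m)"
  shows "\<exists>\<kappa>1 \<kappa>2 \<kappa>3 :: complex.
     smult \<kappa>1 (A n) * [:- b n, 1:] =
       smult (poly (C n) (b n)) (A (Suc n)) - smult (poly (A (Suc n)) (b n)) (C n) \<and>
     smult \<kappa>2 (B n) * [:- a n, 1:] =
       smult (poly (C n) (a n)) (B (Suc n)) - smult (poly (B (Suc n)) (a n)) (C n) \<and>
     smult \<kappa>3 (C n) * [:- a (Suc n), 1:] =
       smult (poly (A (Suc n)) (a (Suc n))) (C (Suc n))
         - smult (poly (C (Suc n)) (a (Suc n))) (A (Suc n))"
proof -
  have lp: "\<And>c k. lin_prod c (Suc k) = lin_prod c k * [:- c k, 1:]" by (rule lin_prod_Suc)
  have s1: "\<exists>\<kappa>. smult \<kappa> (A n) * [:- b n, 1:] =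
       smult (poly (C n) (b n)) (A (Suc n)) - smult (poly (A (Suc n)) (b n)) (C n)"
  proof (rule step[OF lin uniqA _ _ orthA])
    show "lin_prod a (Suc n) * lin_prod b n * [:- b n, 1:] = lin_prod a (Suc n) * lin_prod b (Suc n)"
      by (simp only: lp mult_ac)
    show "\<forall>p. degree p < n \<longrightarrow> L (Fract (A (Suc n) * p) (lin_prod a (Suc n) * lin_prod b (Suc n))) = 0"
      by (rule shiftA) (use orthA[of "Suc n"] in simp)
    show "\<forall>p. degree p < n \<longrightarrow> L (Fract (C n * p) (lin_prod a (Suc n) * lin_prod b (Suc n))) = 0"
      using orthC[of n] unfolding orth_def by blast
  qed (use degA degC in auto)
  have s2: "\<exists>\<kappa>. smult \<kappa> (B n) * [:- a n, 1:] =
       smult (poly (C n) (a n)) (B (Suc n)) - smult (poly (B (Suc n)) (a n)) (C n)"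
  proof (rule step[OF lin uniqB _ _ orthB])
    show "lin_prod a n * lin_prod b (Suc n) * [:- a n, 1:] = lin_prod a (Suc n) * lin_prod b (Suc n)"
      by (simp only: lp mult_ac)
    show "\<forall>p. degree p < n \<longrightarrow> L (Fract (B (Suc n) * p) (lin_prod a (Suc n) * lin_prod b (Suc n))) = 0"
      by (rule shiftB) (use orthB[of "Suc n"] in simp)
    show "\<forall>p. degree p < n \<longrightarrow> L (Fract (C n * p) (lin_prod a (Suc n) * lin_prod b (Suc n))) = 0"
      using orthC[of n] unfolding orth_def by blast
  qed (use degB degC in auto)
  have s3: "\<exists>\<kappa>. smult \<kappa> (C n) * [:- a (Suc n), 1:] =
       smult (poly (A (Suc n)) (a (Suc n))) (C (Suc n))
         - smult (poly (C (Suc n)) (a (Suc n))) (A (Suc n))"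
  proof (rule step[OF lin uniqC _ _ orthC])
    show "lin_prod a (Suc n) * lin_prod b (Suc n) * [:- a (Suc n), 1:] = lin_prod a (Suc (Suc n)) * lin_prod b (Suc n)"
      by (simp only: lp mult_ac)
    show "\<forall>p. degree p < n \<longrightarrow> L (Fract (C (Suc n) * p) (lin_prod a (Suc (Suc n)) * lin_prod b (Suc n))) = 0"
      by (rule shiftB) (use orthC[of "Suc n"] in simp)
    show "\<forall>p. degree p < n \<longrightarrow> L (Fract (A (Suc n) * p) (lin_prod a (Suc (Suc n)) * lin_prod b (Suc n))) = 0"
      using orthA[of "Suc n"] unfolding orth_def by auto
  qed (use degA degC in auto)
  show ?thesis using s1 s2 s3 by blast
qed

end
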